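(* Let $A, B, C \in \mathbb{C}^{m\times n}$. The $\top$-Stein matrix equation $$X = A X^\top B + C$$ has a unique solution $X \in \mathbb{C}^{m\times n}$ if and only if both of the following conditions hold: (i) for every $\lambda \in \sigma(A^\top B)$ with $\lambda \neq -1$ and $\lambda \neq 0$, one has $\dfrac{1}{\lambda} \notin \sigma(A^\top B)$; (ii) if $-1 \in \sigma(A^\top B)$, then $-1$ is a simple eigenvalue of $A^\top B$.
   Context: For a square matrix $M$, $\sigma(M)$ denotes the set of eigenvalues of $M$. Here $X^\top$ denotes the (ordinary, non-conjugate) transpose of $X$, also for complex matrices. A simple eigenvalue is one of algebraic multiplicity one. *)

theory Defs
  imports "Jordan_Normal_Form.Spectral_Radius"
begin

definition alg_mult :: "complex mat \<Rightarrow> complex \<Rightarrow> nat" where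
  "alg_mult M e = order e (char_poly M)"

definition simple_eigenvalue :: "complex mat \<Rightarrow> complex \<Rightarrow> bool" where
  "simple_eigenvalue M e \<longleftrightarrow> alg_mult M e = 1"

end

theory Submission
  imports Defs
begin

lemma sum_div_mod: fixes m n :: nat shows "(\<Sum>b<m*n. g (b div n) (b mod n)) = (\<Sum>l<m. \<Sum>k<n. (g l k :: 'a::comm_monoid_add))"
proof (induction m)
  case 0 then show ?case by simp
next
  case (Suc m)
  have "{..<Suc m * n} = {..<m*n} \<union> {m*n..<m*n+n}" by auto
  then have "(\<Sum>b<Suc m*n. g (b div n) (b mod n)) = (\<Sum>b<m*n. g (b div n) (b mod n)) + (\<Sum>b\<in>{m*n..<m*n+n}. g (b div n) (b mod n))"
    by (metis (no_types, lifting) finite_atLeastLessThan finite_lessThan ivl_disj_int_one(2) sum.union_disjoint)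
  also have "(\<Sum>b\<in>{m*n..<m*n+n}. g (b div n) (b mod n)) = (\<Sum>k<n. g m k)"
  proof -
    have "(\<Sum>b\<in>{m*n..<m*n+n}. g (b div n) (b mod n)) = (\<Sum>k\<in>{0..<n}. g ((k + m*n) div n) ((k+m*n) mod n))"
      by (subst sum.shift_bounds_nat_ivl[symmetric]) (simp add: add.commute)
    also have "\<dots> = (\<Sum>k<n. g m k)" by (intro sum.cong) auto
    finally show ?thesis .
  qed
  finally show ?case using Suc by simp
qed

lemma tri_entry:
  fixes A B X :: "'a::comm_ring_1 mat"
  assumes A: "A \<in> carrier_mat m n" and B: "B \<in> carrier_mat m n" and X: "X \<in> carrier_mat m n"
    and i: "i < m" and j: "j < n"
  shows "(A * transpose_mat X * B) $$ (i,j) = (\<Sum>l<m. \<Sum>k<n. A$$(i,k) * X$$(l,k) * B$$(l,j))"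
  using assms
  apply (simp add: scalar_prod_def lessThan_atLeast0 sum_distrib_left sum_distrib_right mult.assoc)
  apply (rule sum.swap)
  done

lemma minus_eq_imp:
  fixes X Y C :: "'a::ab_group_add mat"
  assumes "X \<in> carrier_mat m n" "Y \<in> carrier_mat m n" "C \<in> carrier_mat m n" "X - Y = C"
  shows "X = Y + C"
proof (rule eq_matI)
  fix i j assume ij: "i < dim_row (Y + C)" "j < dim_col (Y + C)"
  have "(X - Y) $$ (i,j) = X $$ (i,j) - Y $$ (i,j)" using assms(1-3) ij by simp
  then have "X $$ (i,j) - Y $$ (i,j) = C $$ (i,j)" using assms(4) by simp
  then show "X $$ (i,j) = (Y + C) $$ (i,j)" using assms ij by (simp add: algebra_simps)
qed (use assms in auto)

lemma exists_sol:
  fixes A B C :: "complex mat"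
  assumes A: "A \<in> carrier_mat m n" and B: "B \<in> carrier_mat m n" and C: "C \<in> carrier_mat m n"
  and inj: "\<And>X. X \<in> carrier_mat m n \<Longrightarrow> X = A * transpose_mat X * B \<Longrightarrow> X = 0\<^sub>m m n"
  shows "\<exists>X\<in>carrier_mat m n. X = A * transpose_mat X * B + C"
proof -
  define N where "N = m*n"
  define vo where "vo X = vec N (\<lambda>a. X $$ (a div n, a mod n))" for X :: "complex mat"
  define mo where "mo v = mat m n (\<lambda>(i,j). v $ (i*n+j))" for v :: "complex vec"
  define L where "L = mat N N (\<lambda>(a,b). (if a = b then 1 else 0) - A $$ (a div n, b mod n) * B $$ (b div n, a mod n))"
  have L: "L \<in> carrier_mat N N" unfolding L_def by simp
  have idx: "i*n+j < N \<and> (i*n+j) div n = i \<and> (i*n+j) mod n = j" if "i<m" "j<n" for i j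
  proof -
    have "i*n+j < (i+1)*n" using that by simp
    also have "\<dots> \<le> m*n" using that by (intro mult_right_mono) auto
    finally show ?thesis using that by (simp add: N_def)
  qed
  have idx2: "a div n < m \<and> a mod n < n" if "a < N" for a
  proof -
    have n0: "n > 0" using that N_def by (cases n) auto
    then show ?thesis using that unfolding N_def by (simp add: less_mult_imp_div_less)
  qed
  have vo_inj: "X = Y" if "X \<in> carrier_mat m n" "Y \<in> carrier_mat m n" "vo X = vo Y" for X Y
  proof (rule eq_matI)
    fix i j assume ij: "i < dim_row Y" "j < dim_col Y"
    then have "vo X $ (i*n+j) = vo Y $ (i*n+j)" using that by simp
    moreover have "i < m" "j < n" using ij that by auto
    ultimately show "X $$ (i,j) = Y $$ (i,j)" using idx[of i j] unfolding vo_def by simp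
  qed (use that in auto)
  have mo_vo: "vo (mo v) = v" if "v \<in> carrier_vec N" for v
    using that idx2 by (intro eq_vecI) (auto simp: vo_def mo_def)
  have mo_c: "mo v \<in> carrier_mat m n" for v by (simp add: mo_def)
  have key: "L *\<^sub>v vo X = vo (X - A * transpose_mat X * B)" if X: "X \<in> carrier_mat m n" for X
  proof (rule eq_vecI)
    fix a assume "a < dim_vec (vo (X - A * transpose_mat X * B))"
    then have a: "a < N" by (simp add: vo_def)
    define i j where "i = a div n" and "j = a mod n"
    have ij: "i < m" "j < n" using idx2[OF a] i_def j_def by auto
    have "(L *\<^sub>v vo X) $ a = (\<Sum>b<N. L $$ (a,b) * X $$ (b div n, b mod n))"
      using a L by (simp add: scalar_prod_def vo_def lessThan_atLeast0 L_def)
    also have "\<dots> = (\<Sum>b<N. (if a = b then X $$ (b div n, b mod n) else 0))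
        - (\<Sum>b<N. A $$ (i, b mod n) * X $$ (b div n, b mod n) * B $$ (b div n, j))"
      unfolding sum_subtractf[symmetric] using a
      by (intro sum.cong) (auto simp: L_def i_def j_def algebra_simps)
    also have "(\<Sum>b<N. (if a = b then X $$ (b div n, b mod n) else 0)) = X $$ (i,j)"
      using a by (simp add: i_def j_def)
    also have "(\<Sum>b<N. A $$ (i, b mod n) * X $$ (b div n, b mod n) * B $$ (b div n, j))
       = (\<Sum>l<m. \<Sum>k<n. A$$(i,k) * X$$(l,k) * B$$(l,j))"
      unfolding N_def by (rule sum_div_mod)
    also have "\<dots> = (A * transpose_mat X * B) $$ (i,j)"
      using tri_entry[OF A B X ij] by simp
    finally show "(L *\<^sub>v vo X) $ a = vo (X - A * transpose_mat X * B) $ a"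
      using a ij A B X by (simp add: vo_def i_def j_def)
  qed (use L in \<open>simp add: vo_def\<close>)
  have vz: "vo (0\<^sub>m m n) = 0\<^sub>v N" using idx2 by (intro eq_vecI) (auto simp: vo_def)
  have "det L \<noteq> 0"
  proof
    assume "det L = 0"
    then obtain v where v: "v \<in> carrier_vec N" "v \<noteq> 0\<^sub>v N" "L *\<^sub>v v = 0\<^sub>v N"
      using det_0_iff_vec_prod_zero[OF L] by auto
    define X where "X = mo v"
    have X: "X \<in> carrier_mat m n" by (simp add: X_def mo_c)
    have "vo (X - A * transpose_mat X * B) = vo (0\<^sub>m m n)"
      using key[OF X] v mo_vo[OF v(1)] unfolding X_def vz by simp
    then have "X - A * transpose_mat X * B = 0\<^sub>m m n"
      using X A B by (intro vo_inj) auto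
    then have "X = A * transpose_mat X * B + 0\<^sub>m m n"
      using X A B by (intro minus_eq_imp) auto
    then have "X = A * transpose_mat X * B" using X A B by simp
    then have "X = 0\<^sub>m m n" using inj X by auto
    then have "v = 0\<^sub>v N" using mo_vo[OF v(1)] vz unfolding X_def by simp
    with v show False by simp
  qed
  then have "L \<in> Units (ring_mat TYPE(complex) N ())" by (rule det_non_zero_imp_unit[OF L])
  then obtain Li where Li: "Li \<in> carrier_mat N N" "L * Li = 1\<^sub>m N"
    unfolding Units_def ring_mat_def by auto
  define v where "v = Li *\<^sub>v vo C"
  have vc: "v \<in> carrier_vec N" using Li by (simp add: v_def vo_def)
  define X where "X = mo v"
  have X: "X \<in> carrier_mat m n" by (simp add: X_def mo_c)
  have "L *\<^sub>v v = vo C"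
    unfolding v_def using Li L by (simp add: assoc_mult_mat_vec[symmetric] vo_def)
  then have "vo (X - A * transpose_mat X * B) = vo C"
    using key[OF X] mo_vo[OF vc] unfolding X_def by simp
  then have "X - A * transpose_mat X * B = C" using X A B C by (intro vo_inj) auto
  then have "X = A * transpose_mat X * B + C"
    using X A B C by (intro minus_eq_imp) auto
  with X show ?thesis by blast
qed

lemma kernel_reduce:
  fixes A B :: "'a::comm_ring_1 mat"
  assumes A: "A \<in> carrier_mat m n" and B: "B \<in> carrier_mat m n"
  shows "(\<exists>X\<in>carrier_mat m n. X \<noteq> 0\<^sub>m m n \<and> X = A * transpose_mat X * B) \<longleftrightarrow>
         (\<exists>W\<in>carrier_mat n n. W \<noteq> 0\<^sub>m n n \<and> transpose_mat W = W * (transpose_mat A * B))"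
proof
  assume "\<exists>X\<in>carrier_mat m n. X \<noteq> 0\<^sub>m m n \<and> X = A * transpose_mat X * B"
  then obtain X where X: "X \<in> carrier_mat m n" "X \<noteq> 0\<^sub>m m n" "X = A * transpose_mat X * B" by auto
  define W where "W = transpose_mat B * X"
  have W: "W \<in> carrier_mat n n" using X B by (simp add: W_def)
  have WT: "transpose_mat W = transpose_mat X * B" using X B
    by (simp add: W_def transpose_mult)
  have XT: "transpose_mat X = transpose_mat B * X * transpose_mat A"
  proof -
    from X(3) have "transpose_mat X = transpose_mat (A * transpose_mat X * B)" by (rule arg_cong)
    also have "\<dots> = transpose_mat B * transpose_mat (A * transpose_mat X)"
      by (rule transpose_mult) (use A B X in auto)
    also have "transpose_mat (A * transpose_mat X) = X * transpose_mat A"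
      using A X by (simp add: transpose_mult)
    also have "transpose_mat B * (X * transpose_mat A) = transpose_mat B * X * transpose_mat A"
      by (rule assoc_mult_mat[symmetric]) (use A B X in auto)
    finally show ?thesis .
  qed
  have "W * (transpose_mat A * B) = transpose_mat B * X * transpose_mat A * B"
    using A B X by (simp add: W_def assoc_mult_mat[of _ n m _ m _ n] assoc_mult_mat[of _ n m _ n _ n]
       assoc_mult_mat[of _ m n _ m _ n])
  also have "\<dots> = transpose_mat W" using XT WT by simp
  finally have eq: "transpose_mat W = W * (transpose_mat A * B)" by simp
  have "W \<noteq> 0\<^sub>m n n"
  proof
    assume "W = 0\<^sub>m n n"
    then have "transpose_mat X * B = 0\<^sub>m n n" using WT by simp
    then have "A * (transpose_mat X * B) = 0\<^sub>m m n" using A by simp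
    then have "X = 0\<^sub>m m n" using X A B by (simp add: assoc_mult_mat[of _ m n _ m _ n])
    with X show False by simp
  qed
  with W eq show "\<exists>W\<in>carrier_mat n n. W \<noteq> 0\<^sub>m n n \<and> transpose_mat W = W * (transpose_mat A * B)" by blast
next
  assume "\<exists>W\<in>carrier_mat n n. W \<noteq> 0\<^sub>m n n \<and> transpose_mat W = W * (transpose_mat A * B)"
  then obtain W where W: "W \<in> carrier_mat n n" "W \<noteq> 0\<^sub>m n n" "transpose_mat W = W * (transpose_mat A * B)" by auto
  define X where "X = A * transpose_mat W"
  have X: "X \<in> carrier_mat m n" using A W(1) by (simp add: X_def)
  have XT: "transpose_mat X = W * transpose_mat A" using A W(1) by (simp add: X_def transpose_mult)
  have "A * transpose_mat X * B = A * (W * (transpose_mat A * B))"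
    using A B W by (simp add: XT assoc_mult_mat[of _ m n _ n _ n] assoc_mult_mat[of _ n n _ m _ n]
        assoc_mult_mat[of _ m n _ m _ n])
  also have "\<dots> = X" using W(3) by (simp add: X_def)
  finally have eq: "X = A * transpose_mat X * B" by simp
  have "X \<noteq> 0\<^sub>m m n"
  proof
    assume "X = 0\<^sub>m m n"
    then have "transpose_mat X * B = 0\<^sub>m n n" using B by simp
    then have "transpose_mat W = 0\<^sub>m n n" using XT W A B
      by (simp add: assoc_mult_mat[of _ n n _ m _ n])
    then have "W = 0\<^sub>m n n" using W
      by (metis transpose_transpose zero_transpose_mat)
    with W show False by simp
  qed
  with X eq show "\<exists>X\<in>carrier_mat m n. X \<noteq> 0\<^sub>m m n \<and> X = A * transpose_mat X * B" by blast
qed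

lemma congr_transfer:
  fixes M T P Q W :: "'a::comm_ring_1 mat"
  assumes M: "M \<in> carrier_mat n n" and T: "T \<in> carrier_mat n n" and P: "P \<in> carrier_mat n n"
    and Q: "Q \<in> carrier_mat n n" and PQ: "P * Q = 1\<^sub>m n" and QP: "Q * P = 1\<^sub>m n"
    and MT: "M = P * T * Q"
    and W: "W \<in> carrier_mat n n" "W \<noteq> 0\<^sub>m n n" "transpose_mat W = W * M"
  shows "\<exists>U\<in>carrier_mat n n. U \<noteq> 0\<^sub>m n n \<and> transpose_mat U = U * T"
proof -
  define U where "U = transpose_mat P * W * P"
  have U: "U \<in> carrier_mat n n" using P W by (simp add: U_def)
  have WM: "W * M \<in> carrier_mat n n" using W M by simp
  have "transpose_mat U = transpose_mat P * transpose_mat W * P"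
  proof -
    have "transpose_mat U = transpose_mat P * transpose_mat (transpose_mat P * W)"
      unfolding U_def by (rule transpose_mult) (use P W(1) in auto)
    also have "transpose_mat (transpose_mat P * W) = transpose_mat W * P"
      using P W(1) by (simp add: transpose_mult)
    also have "transpose_mat P * (transpose_mat W * P) = transpose_mat P * transpose_mat W * P"
      by (rule assoc_mult_mat[symmetric]) (use P W(1) in auto)
    finally show ?thesis .
  qed
  also have "\<dots> = transpose_mat P * W * (P * T * (Q * P))"
    using P W T Q M MT WM by (simp add: W(3) assoc_mult_mat[of _ n n _ n _ n])
  also have "\<dots> = U * T" using P W T Q QP by (simp add: U_def assoc_mult_mat[of _ n n _ n _ n])
  finally have eq: "transpose_mat U = U * T" .
  have "U \<noteq> 0\<^sub>m n n"
  proof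
    assume "U = 0\<^sub>m n n"
    then have "transpose_mat Q * U * Q = 0\<^sub>m n n" using Q by simp
    moreover have "transpose_mat Q * U * Q = transpose_mat (P * Q) * W * (P * Q)"
      using P Q W by (simp add: U_def transpose_mult assoc_mult_mat[of _ n n _ n _ n])
    ultimately have "W = 0\<^sub>m n n" using PQ W by simp
    with W show False by simp
  qed
  with U eq show ?thesis by blast
qed

lemma key_less:
  fixes i j k n :: nat
  assumes "i < n" "j < n" "k < j"
  shows "max i k * n + min i k < max i j * n + min i j"
proof (cases "j \<le> i")
  case True
  then show ?thesis using assms by (simp add: max_def min_def)
next
  case False
  then have ij: "i < j" by simp
  have "max i k * n + min i k < max i k * n + n" using assms by (simp add: min_def)
  also have "\<dots> = (max i k + 1) * n" by simp
  also have "\<dots> \<le> j * n" using ij assms by (intro mult_right_mono) auto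
  also have "\<dots> \<le> max i j * n + min i j" using ij by (simp add: max_def)
  finally show ?thesis .
qed

lemma entry_eq:
  fixes U T :: "'a::comm_ring_1 mat"
  assumes T: "T \<in> carrier_mat n n" and ut: "upper_triangular T" and U: "U \<in> carrier_mat n n"
    and eq: "transpose_mat U = U * T" and i: "i < n" and j: "j < n"
  shows "U $$ (j,i) = U $$ (i,j) * T $$ (j,j) + (\<Sum>k<j. U $$ (i,k) * T $$ (k,j))"
proof -
  have "U $$ (j,i) = (U * T) $$ (i,j)" using eq U i j
    by (metis carrier_matD index_transpose_mat(1))
  also have "\<dots> = (\<Sum>k<n. U $$ (i,k) * T $$ (k,j))"
    using U T i j by (simp add: scalar_prod_def lessThan_atLeast0)
  also have "\<dots> = (\<Sum>k\<in>{..<j} \<union> {j} \<union> {j<..<n}. U $$ (i,k) * T $$ (k,j))"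
    using j by (intro sum.cong) auto
  also have "\<dots> = (\<Sum>k<j. U $$ (i,k) * T $$ (k,j)) + U $$ (i,j) * T $$ (j,j)
       + (\<Sum>k\<in>{j<..<n}. U $$ (i,k) * T $$ (k,j))"
    by (subst sum.union_disjoint; auto)+
  also have "(\<Sum>k\<in>{j<..<n}. U $$ (i,k) * T $$ (k,j)) = 0"
    using ut T by (intro sum.neutral) (auto simp: upper_triangular_def)
  finally show ?thesis by (simp add: algebra_simps)
qed

lemma tri_kernel:
  fixes T U :: "'a::field mat"
  assumes T: "T \<in> carrier_mat n n" and ut: "upper_triangular T"
    and d1: "\<And>i. i < n \<Longrightarrow> T $$ (i,i) \<noteq> 1"
    and d2: "\<And>i j. i < n \<Longrightarrow> j < n \<Longrightarrow> i \<noteq> j \<Longrightarrow> T $$ (i,i) * T $$ (j,j) \<noteq> 1"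
    and U: "U \<in> carrier_mat n n" and eq: "transpose_mat U = U * T"
  shows "U = 0\<^sub>m n n"
proof -
  define K where "K i j = max i j * n + min i j" for i j :: nat
  have main: "\<forall>i j. i < n \<longrightarrow> j < n \<longrightarrow> K i j = s \<longrightarrow> U $$ (i,j) = 0" for s
  proof (induction s rule: less_induct)
    case (less s)
    show ?case
    proof (intro allI impI)
      fix i j assume i: "i < n" and j: "j < n" and s: "K i j = s"
      have z1: "(\<Sum>k<j. U $$ (i,k) * T $$ (k,j)) = 0"
      proof (intro sum.neutral ballI)
        fix k assume "k \<in> {..<j}"
        then have k: "k < j" by simp
        have "K i k < s" using key_less[OF i j k] s by (simp add: K_def)
        then have "U $$ (i,k) = 0" using less k i j by auto
        then show "U $$ (i,k) * T $$ (k,j) = 0" by simp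
      qed
      have z2: "(\<Sum>k<i. U $$ (j,k) * T $$ (k,i)) = 0"
      proof (intro sum.neutral ballI)
        fix k assume "k \<in> {..<i}"
        then have k: "k < i" by simp
        have "K j k < s" using key_less[OF j i k] s by (simp add: K_def max.commute min.commute)
        then have "U $$ (j,k) = 0" using less k i j by auto
        then show "U $$ (j,k) * T $$ (k,i) = 0" by simp
      qed
      have e1: "U $$ (j,i) = U $$ (i,j) * T $$ (j,j)"
        using entry_eq[OF T ut U eq i j] z1 by simp
      have e2: "U $$ (i,j) = U $$ (j,i) * T $$ (i,i)"
        using entry_eq[OF T ut U eq j i] z2 by simp
      have e3: "U $$ (i,j) * (1 - T $$ (i,i) * T $$ (j,j)) = 0"
        using e1 e2 by (simp add: algebra_simps)
      show "U $$ (i,j) = 0"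
      proof (cases "i = j")
        case True
        then have "U $$ (i,i) * (1 - T $$ (i,i)) = 0" using e2 by (simp add: algebra_simps)
        then show ?thesis using d1[OF i] True by simp
      next
        case False
        then show ?thesis using e3 d2[OF i j False] by simp
      qed
    qed
  qed
  show ?thesis using main U by (intro eq_matI) auto
qed

lemma tri_construct1:
  fixes T :: "'a::field mat"
  assumes T: "T \<in> carrier_mat n n" and ut: "upper_triangular T"
    and n: "n \<ge> 1" and d: "T $$ (n-1,n-1) = 1"
  shows "\<exists>U\<in>carrier_mat n n. U \<noteq> 0\<^sub>m n n \<and> transpose_mat U = U * T"
proof -
  define b where "b = n - 1"
  define U where "U = mat n n (\<lambda>(i,j). if i = b \<and> j = b then 1 else (0::'a))"
  have U: "U \<in> carrier_mat n n" by (simp add: U_def)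
  have bn: "b < n" using n by (simp add: b_def)
  have "U $$ (b,b) \<noteq> 0\<^sub>m n n $$ (b,b)" using bn by (simp add: U_def)
  then have nz: "U \<noteq> 0\<^sub>m n n" by auto
  have "transpose_mat U = U * T"
  proof (rule eq_matI)
    fix i j assume "i < dim_row (U * T)" "j < dim_col (U * T)"
    then have i: "i < n" and j: "j < n" using U T by auto
    have "(U * T) $$ (i,j) = (\<Sum>k<n. U $$ (i,k) * T $$ (k,j))"
      using U T i j by (simp add: scalar_prod_def lessThan_atLeast0)
    also have "\<dots> = (\<Sum>k\<in>{b}. U $$ (i,k) * T $$ (k,j))"
      using bn i by (intro sum.mono_neutral_right) (auto simp: U_def)
    also have "\<dots> = (if i = b then T $$ (b,j) else 0)" using bn i by (simp add: U_def)
    also have "\<dots> = transpose_mat U $$ (i,j)"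
    proof -
      have "j < b \<Longrightarrow> T $$ (b,j) = 0" using ut T bn by (auto simp: upper_triangular_def)
      moreover have "j \<le> b" using j b_def by simp
      ultimately show ?thesis using i j d bn by (auto simp: U_def b_def)
    qed
    finally show "transpose_mat U $$ (i,j) = (U * T) $$ (i,j)" by simp
  qed (use U T in auto)
  with U nz show ?thesis by blast
qed

lemma tri_construct2:
  fixes T :: "'a::field mat"
  assumes T: "T \<in> carrier_mat n n" and ut: "upper_triangular T"
    and n: "n \<ge> 2" and d: "T $$ (n-2,n-2) * T $$ (n-1,n-1) = 1" and d1: "T $$ (n-1,n-1) \<noteq> 1"
  shows "\<exists>U\<in>carrier_mat n n. U \<noteq> 0\<^sub>m n n \<and> transpose_mat U = U * T"
proof -
  define a where "a = n - 2"
  define b where "b = n - 1"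
  define mu where "mu = T $$ (b,b)"
  define la where "la = T $$ (a,a)"
  define t where "t = T $$ (a,b)"
  define dd where "dd = mu * t / (1 - mu)"
  have lm: "la * mu = 1" using d by (simp add: la_def mu_def a_def b_def)
  have m1: "1 - mu \<noteq> 0" using d1 by (simp add: mu_def b_def)
  have ddeq: "dd = mu * t + dd * mu" using m1 unfolding dd_def by (simp add: field_simps)
  define U where "U = mat n n (\<lambda>(i,j). if i = a \<and> j = b then 1 else if i = b \<and> j = a then mu
       else if i = b \<and> j = b then dd else (0::'a))"
  have U: "U \<in> carrier_mat n n" by (simp add: U_def)
  have bn: "b < n" "a < b" using n by (auto simp: b_def a_def)
  have "U $$ (a,b) \<noteq> 0\<^sub>m n n $$ (a,b)" using bn by (simp add: U_def)
  then have nz: "U \<noteq> 0\<^sub>m n n" by auto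
  have Tz: "T $$ (k,j) = 0" if "j < k" "k < n" for k j using ut T that by (auto simp: upper_triangular_def)
  have "transpose_mat U = U * T"
  proof (rule eq_matI)
    fix i j assume "i < dim_row (U * T)" "j < dim_col (U * T)"
    then have i: "i < n" and j: "j < n" using U T by auto
    have "(U * T) $$ (i,j) = (\<Sum>k<n. U $$ (i,k) * T $$ (k,j))"
      using U T i j by (simp add: scalar_prod_def lessThan_atLeast0)
    also have "\<dots> = (\<Sum>k\<in>{a,b}. U $$ (i,k) * T $$ (k,j))"
      using bn i by (intro sum.mono_neutral_right) (auto simp: U_def)
    also have "\<dots> = U $$ (i,a) * T $$ (a,j) + U $$ (i,b) * T $$ (b,j)" using bn by simp
    also have "\<dots> = transpose_mat U $$ (i,j)"
    proof -
      have jb: "j \<le> b" using j b_def by simp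
      have ab: "a = b - 1" "b = n - 1" by (auto simp: a_def b_def)
      consider "j < a" | "j = a" | "j = b" using jb ab bn by linarith
      then show ?thesis
      proof cases
        case 1
        then show ?thesis using Tz[of j a] Tz[of j b] bn i j by (auto simp: U_def)
      next
        case 2
        then show ?thesis using Tz[of a b] bn i j lm by (auto simp: U_def la_def mult.commute)
      next
        case 3
        then show ?thesis using bn i j ddeq by (auto simp: U_def mu_def t_def mult.commute)
      qed
    qed
    finally show "transpose_mat U $$ (i,j) = (U * T) $$ (i,j)" by simp
  qed (use U T in auto)
  with U nz show ?thesis by blast
qed

lemma prod_lin_nz: "(\<Prod>a\<leftarrow>as. [:- a, 1:]) \<noteq> (0 :: 'a::idom poly)"
  unfolding prod_list_zero_iff by auto

lemma order_prod_lin: "order e (\<Prod>a\<leftarrow>as. [:- a, 1:]) = count (mset as) (e :: 'a::idom)"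
proof (induction as)
  case Nil
  then show ?case by (simp add: order_0I)
next
  case (Cons a as)
  define P where "P = (\<Prod>a\<leftarrow>as. [:- a, 1:])"
  have "(\<Prod>a\<leftarrow>a#as. [:- a, 1:]) = [:-a,1:] * P" unfolding P_def list.map prod_list.Cons ..
  moreover have "[:-a,1:] * P \<noteq> 0" unfolding P_def using prod_lin_nz[of "a#as"]
    unfolding list.map prod_list.Cons .
  ultimately have "order e (\<Prod>a\<leftarrow>a#as. [:- a, 1:]) = order e [:-a,1:] + order e (\<Prod>a\<leftarrow>as. [:- a, 1:])"
    unfolding P_def using order_mult by metis
  also have "order e [:-a,1:] = (if e = a then 1 else 0)"
  proof (cases "e = a")
    case True
    then show ?thesis using order_power_n_n[of a 1] by simp
  next
    case False
    then show ?thesis using order_0I[of "[:-a,1:]" e] by simp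
  qed
  finally show ?case using Cons by auto
qed

lemma poly_prod_lin: "poly (\<Prod>a\<leftarrow>as. [:- a, 1:]) k = 0 \<longleftrightarrow> (k :: 'a::idom) \<in> set as"
  by (induction as) auto

lemma prod_lin_mset: "mset es = mset as \<Longrightarrow> (\<Prod>a\<leftarrow>es. [:- a, 1:]) = (\<Prod>a\<leftarrow>as. [:- a, 1:] :: 'a::comm_ring_1 poly)"
  by (metis mset_map prod_mset_prod_list)

lemma count_two:
  assumes "i < length xs" "j < length xs" "i \<noteq> j" "xs ! i = x" "xs ! j = x"
  shows "count (mset xs) x \<ge> 2"
proof -
  have "count (mset xs) x = card {k. k < length xs \<and> xs ! k = x}"
    by (simp add: count_mset count_list_eq_length_filter length_filter_conv_card eq_commute)
  moreover have "card {i,j} \<le> card {k. k < length xs \<and> xs ! k = x}"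
    using assms by (intro card_mono) auto
  ultimately show ?thesis using assms by simp
qed

lemma reorder:
  fixes as :: "complex list"
  assumes nc: "\<not> ((\<forall>ev\<in>set as. ev \<noteq> -1 \<and> ev \<noteq> 0 \<longrightarrow> 1 / ev \<notin> set as) \<and>
                 (-1 \<in> set as \<longrightarrow> count (mset as) (-1) = 1))"
  shows "\<exists>es. mset es = mset as \<and> ((\<exists>r. es = r @ [1]) \<or> (\<exists>r x y. es = r @ [x,y] \<and> x * y = 1 \<and> y \<noteq> 1))"
proof (cases "\<forall>ev\<in>set as. ev \<noteq> -1 \<and> ev \<noteq> 0 \<longrightarrow> 1 / ev \<notin> set as")
  case False
  then obtain ev where ev: "ev \<in> set as" "ev \<noteq> -1" "ev \<noteq> 0" "1 / ev \<in> set as" by auto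
  show ?thesis
  proof (cases "ev = 1")
    case True
    define es where "es = remove1 1 as @ [1]"
    have "mset es = mset as" using ev True by (simp add: es_def)
    then show ?thesis unfolding es_def by blast
  next
    case False
    define mu where "mu = 1 / ev"
    have mue: "mu \<noteq> ev"
    proof
      assume "mu = ev"
      then have "ev * ev = 1" using ev(3) by (simp add: mu_def field_simps)
      then have "(ev - 1) * (ev + 1) = 0" by (simp add: algebra_simps)
      then show False using ev(2) False by (auto simp: add_eq_0_iff minus_equation_iff[of ev])
    qed
    have mu1: "mu \<noteq> 1" using False by (simp add: mu_def field_simps)
    have prod: "ev * mu = 1" using ev(3) by (simp add: mu_def)
    define es where "es = remove1 mu (remove1 ev as) @ [ev, mu]"
    have "mu \<in> set (remove1 ev as)" using ev(4) mue by (simp add: mu_def in_set_remove1)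
    then have h1: "add_mset mu (mset (remove1 mu (remove1 ev as))) = mset (remove1 ev as)"
      by (metis insert_DiffM mset_remove1 set_mset_mset)
    have h2: "add_mset ev (mset (remove1 ev as)) = mset as"
      using ev(1) by (metis insert_DiffM mset_remove1 set_mset_mset)
    have "mset es = mset as" using h1 h2 by (simp add: es_def)
    then show ?thesis using prod mu1 unfolding es_def by blast
  qed
next
  case True
  with nc have m: "-1 \<in> set as" "count (mset as) (-1) \<noteq> 1" by auto
  have c0: "count (mset as) (-1) > 0" using m(1) by simp
  then have c: "count (mset as) (-1) \<ge> 2" using m(2) by linarith
  have "count (mset (remove1 (-1) as)) (-1) > 0" using c by (simp add: mset_remove1)
  then have "-1 \<in> set (remove1 (-1) as)" by (metis count_greater_zero_iff set_mset_mset)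
  define es where "es = remove1 (-1) (remove1 (-1) as) @ [-1, -1::complex]"
  have h1: "add_mset (-1) (mset (remove1 (-1) (remove1 (-1) as))) = mset (remove1 (-1) as)"
    using \<open>-1 \<in> set (remove1 (-1) as)\<close> by (metis insert_DiffM mset_remove1 set_mset_mset)
  have h2: "add_mset (-1) (mset (remove1 (-1) as)) = mset as"
    using m(1) by (metis insert_DiffM mset_remove1 set_mset_mset)
  have "mset es = mset as" using h1 h2 by (simp add: es_def)
  moreover have "es = remove1 (-1) (remove1 (-1) as) @ [-1, -1] \<and> (-1::complex) * -1 = 1 \<and> (-1::complex) \<noteq> 1"
    by (simp add: es_def)
  ultimately show ?thesis by blast
qed



lemma schur_ex:
  fixes M :: "complex mat"
  assumes M: "M \<in> carrier_mat n n" and cp: "char_poly M = (\<Prod>a\<leftarrow>es. [:- a, 1:])"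
  shows "\<exists>T P Q. T \<in> carrier_mat n n \<and> P \<in> carrier_mat n n \<and> Q \<in> carrier_mat n n \<and>
     P * Q = 1\<^sub>m n \<and> Q * P = 1\<^sub>m n \<and> M = P * T * Q \<and> upper_triangular T \<and>
     (\<forall>i<n. T $$ (i,i) = es ! i) \<and> length es = n"
proof -
  obtain T P Q where sd: "schur_decomposition M es = (T,P,Q)" by (cases "schur_decomposition M es") auto
  from schur_decomposition[OF M cp sd]
  have sim: "similar_mat_wit M T P Q" and ut: "upper_triangular T" and dg: "diag_mat T = es" by auto
  have car: "T \<in> carrier_mat n n" "P \<in> carrier_mat n n" "Q \<in> carrier_mat n n"
    and eqs: "P * Q = 1\<^sub>m n" "Q * P = 1\<^sub>m n" "M = P * T * Q"
    using sim M unfolding similar_mat_wit_def Let_def by auto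
  have len: "length es = n" using dg car by (auto simp: diag_mat_def)
  have "\<forall>i<n. T $$ (i,i) = es ! i" using dg car by (auto simp: diag_mat_def)
  with car eqs ut len show ?thesis by blast
qed

lemma spec_kernel:
  fixes M :: "complex mat"
  assumes M: "M \<in> carrier_mat n n"
  shows "(\<exists>W\<in>carrier_mat n n. W \<noteq> 0\<^sub>m n n \<and> transpose_mat W = W * M) \<longleftrightarrow>
    \<not> ((\<forall>ev\<in>spectrum M. ev \<noteq> -1 \<and> ev \<noteq> 0 \<longrightarrow> 1 / ev \<notin> spectrum M) \<and>
          (-1 \<in> spectrum M \<longrightarrow> simple_eigenvalue M (-1)))"
proof -
  obtain as where cp: "char_poly M = (\<Prod>a\<leftarrow>as. [:- a, 1:])" and len: "length as = n"
    using char_poly_factorized[OF M] by auto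
  have spec: "spectrum M = set as"
    using spectrum_root_char_poly[OF M] cp poly_prod_lin by auto
  have am: "simple_eigenvalue M e \<longleftrightarrow> count (mset as) e = 1" for e
    unfolding simple_eigenvalue_def alg_mult_def cp order_prod_lin ..
  let ?c = "(\<forall>ev\<in>set as. ev \<noteq> -1 \<and> ev \<noteq> 0 \<longrightarrow> 1 / ev \<notin> set as) \<and>
                 (-1 \<in> set as \<longrightarrow> count (mset as) (-1) = 1)"
  have "(\<exists>W\<in>carrier_mat n n. W \<noteq> 0\<^sub>m n n \<and> transpose_mat W = W * M) \<longleftrightarrow> \<not> ?c"
  proof
    assume "\<exists>W\<in>carrier_mat n n. W \<noteq> 0\<^sub>m n n \<and> transpose_mat W = W * M"
    then obtain W where W: "W \<in> carrier_mat n n" "W \<noteq> 0\<^sub>m n n" "transpose_mat W = W * M" by auto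
    obtain T P Q where TPQ: "T \<in> carrier_mat n n" "P \<in> carrier_mat n n" "Q \<in> carrier_mat n n"
      "P * Q = 1\<^sub>m n" "Q * P = 1\<^sub>m n" "M = P * T * Q" "upper_triangular T"
      "\<forall>i<n. T $$ (i,i) = as ! i"
      using schur_ex[OF M cp] by blast
    obtain U where U: "U \<in> carrier_mat n n" "U \<noteq> 0\<^sub>m n n" "transpose_mat U = U * T"
      using congr_transfer[OF M TPQ(1-6) W] by blast
    show "\<not> ?c"
    proof
      assume c: ?c
      have d1: "T $$ (i,i) \<noteq> 1" if i: "i < n" for i
      proof
        assume "T $$ (i,i) = 1"
        then have "1 \<in> set as" using TPQ(8) i len by (metis nth_mem)
        moreover have "(1::complex) \<noteq> -1 \<and> (1::complex) \<noteq> 0" by simp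
        ultimately have "1 / (1::complex) \<notin> set as" using c by blast
        then show False using \<open>1 \<in> set as\<close> by simp
      qed
      have d2: "T $$ (i,i) * T $$ (j,j) \<noteq> 1" if i: "i < n" and j: "j < n" and ij: "i \<noteq> j" for i j
      proof
        assume p: "T $$ (i,i) * T $$ (j,j) = 1"
        have ai: "as ! i \<in> set as" "as ! j \<in> set as" using i j len by auto
        have p': "as ! i * as ! j = 1" using p TPQ(8) i j by simp
        then have nz: "as ! i \<noteq> 0" by auto
        show False
        proof (cases "as ! i = -1")
          case True
          then have "- (as ! j) = 1" using p' by simp
          then have "as ! j = -1" by (metis minus_minus)
          then have "count (mset as) (-1) \<ge> 2" using count_two[of i as j "-1"] True i j ij len by simp
          moreover have "-1 \<in> set as \<longrightarrow> count (mset as) (-1) = 1" using c by blast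
          ultimately show False using ai(1) True by simp
        next
          case False
          have "as ! j = 1 / as ! i" using p' nz by (simp add: eq_divide_eq mult.commute)
          then have "1 / as ! i = as ! j" by simp
          then have "as ! i \<noteq> -1 \<and> as ! i \<noteq> 0 \<longrightarrow> 1 / as ! i \<notin> set as" using c ai by blast
          then show False using False nz ai \<open>1 / as ! i = as ! j\<close> by simp
        qed
      qed
      have "U = 0\<^sub>m n n" by (rule tri_kernel[OF TPQ(1) TPQ(7) d1 d2 U(1) U(3)])
      with U(2) show False by simp
    qed
  next
    assume "\<not> ?c"
    then obtain es where es: "mset es = mset as"
      "(\<exists>r. es = r @ [1]) \<or> (\<exists>r x y. es = r @ [x,y] \<and> x * y = 1 \<and> y \<noteq> 1)"
      using reorder by blast
    have cp': "char_poly M = (\<Prod>a\<leftarrow>es. [:- a, 1:])" using cp prod_lin_mset[OF es(1)] by simp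
    obtain T P Q where TPQ: "T \<in> carrier_mat n n" "P \<in> carrier_mat n n" "Q \<in> carrier_mat n n"
      "P * Q = 1\<^sub>m n" "Q * P = 1\<^sub>m n" "M = P * T * Q" "upper_triangular T"
      "\<forall>i<n. T $$ (i,i) = es ! i" "length es = n"
      using schur_ex[OF M cp'] by blast
    have "\<exists>U\<in>carrier_mat n n. U \<noteq> 0\<^sub>m n n \<and> transpose_mat U = U * T"
      using es(2)
    proof
      assume "\<exists>r. es = r @ [1]"
      then obtain r where r: "es = r @ [1]" by auto
      have n: "n \<ge> 1" "n - 1 = length r" using TPQ(9) r by auto
      have "T $$ (n-1,n-1) = 1" using TPQ(8) n r by (simp add: nth_append)
      then show ?thesis using tri_construct1[OF TPQ(1) TPQ(7) n(1)] by blast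
    next
      assume "\<exists>r x y. es = r @ [x,y] \<and> x * y = 1 \<and> y \<noteq> 1"
      then obtain r x y where r: "es = r @ [x,y]" "x * y = 1" "y \<noteq> 1" by auto
      have n: "n \<ge> 2" "n - 2 = length r" "n - 1 = Suc (length r)" using TPQ(9) r by auto
      have "T $$ (n-2,n-2) = x" "T $$ (n-1,n-1) = y" using TPQ(8) n r by (simp_all add: nth_append)
      then show ?thesis using tri_construct2[OF TPQ(1) TPQ(7) n(1)] r by simp
    qed
    then obtain U where U: "U \<in> carrier_mat n n" "U \<noteq> 0\<^sub>m n n" "transpose_mat U = U * T" by auto
    have TM: "T = Q * M * P"
    proof -
      have "Q * M * P = Q * (P * T * Q) * P" using TPQ(6) by simp
      also have "\<dots> = (Q * P) * T * (Q * P)"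
        using TPQ(1-3) by (simp add: assoc_mult_mat[of _ n n _ n _ n])
      also have "\<dots> = T" using TPQ(1,5) by simp
      finally show ?thesis by simp
    qed
    show "\<exists>W\<in>carrier_mat n n. W \<noteq> 0\<^sub>m n n \<and> transpose_mat W = W * M"
      using congr_transfer[OF TPQ(1) M TPQ(3) TPQ(2) TPQ(5) TPQ(4) TM U] by blast
  qed
  then show ?thesis unfolding spec am by simp
qed

lemma sol_add_ker:
  fixes A B C X Y :: "complex mat"
  assumes A: "A \<in> carrier_mat m n" and B: "B \<in> carrier_mat m n" and C: "C \<in> carrier_mat m n"
    and X: "X \<in> carrier_mat m n" and Y: "Y \<in> carrier_mat m n"
    and sX: "X = A * transpose_mat X * B + C" and sY: "Y = A * transpose_mat Y * B"
  shows "X + Y = A * transpose_mat (X + Y) * B + C"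
proof (rule eq_matI)
  fix i j assume "i < dim_row (A * transpose_mat (X + Y) * B + C)" "j < dim_col (A * transpose_mat (X + Y) * B + C)"
  then have i: "i < m" and j: "j < n" using A B C by auto
  have XY: "X + Y \<in> carrier_mat m n" using X Y by simp
  have ex: "X $$ (i,j) = (A * transpose_mat X * B) $$ (i,j) + C $$ (i,j)"
    using arg_cong[OF sX, of "\<lambda>M. M $$ (i,j)"] A B C X i j by simp
  have ey: "Y $$ (i,j) = (A * transpose_mat Y * B) $$ (i,j)"
    using arg_cong[OF sY, of "\<lambda>M. M $$ (i,j)"] by simp
  have "(A * transpose_mat (X + Y) * B) $$ (i,j) = (A * transpose_mat X * B) $$ (i,j) + (A * transpose_mat Y * B) $$ (i,j)"
    unfolding tri_entry[OF A B XY i j] tri_entry[OF A B X i j] tri_entry[OF A B Y i j]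
    using X Y i j by (simp add: distrib_left distrib_right sum.distrib)
  then show "(X + Y) $$ (i,j) = (A * transpose_mat (X + Y) * B + C) $$ (i,j)"
    using ex ey i j X Y A B C by simp
qed (use A B C X Y in auto)

lemma sol_diff:
  fixes A B C X Y :: "complex mat"
  assumes A: "A \<in> carrier_mat m n" and B: "B \<in> carrier_mat m n" and C: "C \<in> carrier_mat m n"
    and X: "X \<in> carrier_mat m n" and Y: "Y \<in> carrier_mat m n"
    and sX: "X = A * transpose_mat X * B + C" and sY: "Y = A * transpose_mat Y * B + C"
  shows "X - Y = A * transpose_mat (X - Y) * B"
proof (rule eq_matI)
  fix i j assume "i < dim_row (A * transpose_mat (X - Y) * B)" "j < dim_col (A * transpose_mat (X - Y) * B)"
  then have i: "i < m" and j: "j < n" using A B C by auto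
  have XY: "X - Y \<in> carrier_mat m n" using X Y by (simp add: minus_carrier_mat)
  have ex: "X $$ (i,j) = (A * transpose_mat X * B) $$ (i,j) + C $$ (i,j)"
    using arg_cong[OF sX, of "\<lambda>M. M $$ (i,j)"] A B C X i j by simp
  have ey: "Y $$ (i,j) = (A * transpose_mat Y * B) $$ (i,j) + C $$ (i,j)"
    using arg_cong[OF sY, of "\<lambda>M. M $$ (i,j)"] A B C Y i j by simp
  have "(A * transpose_mat (X - Y) * B) $$ (i,j) = (A * transpose_mat X * B) $$ (i,j) - (A * transpose_mat Y * B) $$ (i,j)"
    unfolding tri_entry[OF A B XY i j] tri_entry[OF A B X i j] tri_entry[OF A B Y i j]
    using X Y i j by (simp add: right_diff_distrib left_diff_distrib sum_subtractf)
  then show "(X - Y) $$ (i,j) = (A * transpose_mat (X - Y) * B) $$ (i,j)"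
    using ex ey i j X Y A B C by simp
qed (use A B C X Y in auto)

theorem theorem1:
  fixes A B C :: "complex mat" and m n :: nat
  assumes "A \<in> carrier_mat m n" and "B \<in> carrier_mat m n" and "C \<in> carrier_mat m n"
  shows "(\<exists>!X. X \<in> carrier_mat m n \<and> X = A * transpose_mat X * B + C) \<longleftrightarrow>
         ((\<forall>ev\<in>spectrum (transpose_mat A * B). ev \<noteq> -1 \<and> ev \<noteq> 0 \<longrightarrow>
             1 / ev \<notin> spectrum (transpose_mat A * B)) \<and>
          (-1 \<in> spectrum (transpose_mat A * B) \<longrightarrow> simple_eigenvalue (transpose_mat A * B) (-1)))"
    (is "?L \<longleftrightarrow> ?R")
proof -
  note A = assms(1) and B = assms(2) and C = assms(3)
  have M: "transpose_mat A * B \<in> carrier_mat n n" using A B by simp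
  have KER: "(\<exists>X\<in>carrier_mat m n. X \<noteq> 0\<^sub>m m n \<and> X = A * transpose_mat X * B) \<longleftrightarrow> \<not> ?R"
    using kernel_reduce[OF A B] spec_kernel[OF M] by simp
  show ?thesis
  proof
    assume L: ?L
    show ?R
    proof (rule ccontr)
      assume "\<not> ?R"
      with KER obtain Y where Y: "Y \<in> carrier_mat m n" "Y \<noteq> 0\<^sub>m m n" "Y = A * transpose_mat Y * B" by auto
      from L obtain X where X: "X \<in> carrier_mat m n" "X = A * transpose_mat X * B + C" by auto
      have XY: "X + Y \<in> carrier_mat m n \<and> X + Y = A * transpose_mat (X + Y) * B + C"
        using sol_add_ker[OF A B C X(1) Y(1) X(2) Y(3)] X Y by simp
      with L X have "X + Y = X" by auto
      have "Y = 0\<^sub>m m n"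
      proof (rule eq_matI)
        fix i j assume ij: "i < dim_row (0\<^sub>m m n :: complex mat)" "j < dim_col (0\<^sub>m m n :: complex mat)"
        have "(X + Y) $$ (i,j) = X $$ (i,j)" using \<open>X + Y = X\<close> by simp
        then show "Y $$ (i,j) = 0\<^sub>m m n $$ (i,j)" using ij X Y by simp
      qed (use Y in auto)
      with Y show False by simp
    qed
  next
    assume R: ?R
    have inj: "X = 0\<^sub>m m n" if "X \<in> carrier_mat m n" "X = A * transpose_mat X * B" for X
      using KER R that by blast
    obtain X where X: "X \<in> carrier_mat m n" "X = A * transpose_mat X * B + C"
      using exists_sol[OF A B C inj] by blast
    show ?L
    proof (rule ex1I[of _ X])
      show "X \<in> carrier_mat m n \<and> X = A * transpose_mat X * B + C" using X by simp
    next
      fix Y assume Y: "Y \<in> carrier_mat m n \<and> Y = A * transpose_mat Y * B + C"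
      have YX: "Y - X \<in> carrier_mat m n" using X by (simp add: minus_carrier_mat)
      have "Y - X = A * transpose_mat (Y - X) * B"
        using sol_diff[OF A B C _ X(1) _ X(2)] Y by blast
      then have "Y - X = 0\<^sub>m m n" using inj[OF YX] by blast
      show "Y = X"
      proof (rule eq_matI)
        fix i j assume ij: "i < dim_row X" "j < dim_col X"
        have "(Y - X) $$ (i,j) = 0" using \<open>Y - X = 0\<^sub>m m n\<close> ij X by simp
        then show "Y $$ (i,j) = X $$ (i,j)" using ij X Y by simp
      qed (use X Y in auto)
    qed
  qed
qed
end
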